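(* Let $\mathcal{C}$ be a circle and $\mathcal{D}$ a central conic (an ellipse or a hyperbola) such that at least one nondegenerate triangle inscribed in $\mathcal{C}$ is circumscribed about $\mathcal{D}$. Let $\mathcal{P}$ be the family of all nondegenerate triangles inscribed in $\mathcal{C}$ and circumscribed about $\mathcal{D}$. Then $\mathcal{P}$ contains at most two right triangles.
   Context: A central conic is a non-degenerate ellipse (possibly a circle) or hyperbola with a center of symmetry. A triangle is circumscribed about a conic if each of its three sidelines is tangent to the conic. A triangle is inscribed in a circle if its vertices lie on it. A triangle is nondegenerate if its vertices are not collinear. *)

theory Defs
  imports "HOL-Analysis.Analysis"
begin

text \<open>Points of the Euclidean plane are pairs of reals.  A central conic with
center z is given by a symmetric bilinear form
  B(u,v) = a u1 v1 + b (u1 v2 + u2 v1) + c u2 v2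
as the set {x. B(x-z,x-z) = 1}.\<close>

definition cbil :: "real \<Rightarrow> real \<Rightarrow> real \<Rightarrow> real \<times> real \<Rightarrow> real \<times> real \<Rightarrow> real" where
  "cbil a b c u v = a * fst u * fst v + b * (fst u * snd v + snd u * fst v) + c * snd u * snd v"

definition conic_set :: "real \<Rightarrow> real \<Rightarrow> real \<Rightarrow> real \<times> real \<Rightarrow> (real \<times> real) set" where
  "conic_set a b c z = {x. cbil a b c (x - z) (x - z) = 1}"

text \<open>Non-degenerate (a c - b^2 nonzero) and real (nonempty): exactly the
ellipses (positive definite form) and hyperbolas (indefinite form).\<close>
definition central_conic :: "real \<Rightarrow> real \<Rightarrow> real \<Rightarrow> real \<times> real \<Rightarrow> bool" where
  "central_conic a b c z \<longleftrightarrow> a * c - b\<^sup>2 \<noteq> 0 \<and> conic_set a b c z \<noteq> {}"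

text \<open>The line through P and Q (P \<noteq> Q) is tangent to the conic: it is the
tangent line {X. B(x0-z, X-z) = 1} of the conic at some point x0 of the conic.\<close>
definition tangent_line :: "real \<Rightarrow> real \<Rightarrow> real \<Rightarrow> real \<times> real \<Rightarrow> real \<times> real \<Rightarrow> real \<times> real \<Rightarrow> bool" where
  "tangent_line a b c z P Q \<longleftrightarrow>
     (\<exists>x0 \<in> conic_set a b c z. cbil a b c (x0 - z) (P - z) = 1 \<and> cbil a b c (x0 - z) (Q - z) = 1)"

definition poncelet_triangle ::
  "real \<times> real \<Rightarrow> real \<Rightarrow> real \<Rightarrow> real \<Rightarrow> real \<Rightarrow> real \<times> real \<Rightarrow>
   real \<times> real \<Rightarrow> real \<times> real \<Rightarrow> real \<times> real \<Rightarrow> bool" where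
  "poncelet_triangle Oc r a b c z A B C \<longleftrightarrow>
     \<not> collinear {A, B, C} \<and>
     A \<in> sphere Oc r \<and> B \<in> sphere Oc r \<and> C \<in> sphere Oc r \<and>
     tangent_line a b c z A B \<and> tangent_line a b c z B C \<and> tangent_line a b c z C A"

definition right_triangle :: "real \<times> real \<Rightarrow> real \<times> real \<Rightarrow> real \<times> real \<Rightarrow> bool" where
  "right_triangle A B C \<longleftrightarrow>
     (B - A) \<bullet> (C - A) = 0 \<or> (A - B) \<bullet> (C - B) = 0 \<or> (A - C) \<bullet> (B - C) = 0"

end

theory Submission
  imports Defs
begin

lemma inner_rr: "(x::real\<times>real) \<bullet> y = fst x * fst y + snd x * snd y"
  by (cases x; cases y) simp

lemma sphere_rr: "X \<in> sphere (Q0::real\<times>real) r \<Longrightarrow> (fst X - fst Q0)^2 + (snd X - snd Q0)^2 = r^2"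
proof -
  assume "X \<in> sphere Q0 r"
  hence "dist Q0 X = r" by simp
  hence "(dist Q0 X)^2 = r^2" by simp
  moreover have "(dist Q0 X)^2 = (fst X - fst Q0)^2 + (snd X - snd Q0)^2"
    by (cases X; cases Q0) (simp add: dist_Pair_Pair dist_real_def power2_commute)
  ultimately show ?thesis by simp
qed

lemma conic_line_real:
  fixes a b c k gx gy ux uy vx vy wx wy :: real
  assumes det: "a*c - b^2 \<noteq> 0" and k: "k \<noteq> 0" and g: "gx \<noteq> 0 \<or> gy \<noteq> 0"
    and qu: "a*ux^2 + 2*b*ux*uy + c*uy^2 = k"
    and qv: "a* vx^2 + 2*b* vx* vy + c* vy^2 = k"
    and qw: "a*wx^2 + 2*b*wx*wy + c*wy^2 = k"
    and lv: "gx*ux+gy*uy = gx* vx+gy* vy" and lw: "gx*ux+gy*uy = gx*wx+gy*wy"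
    and duv: "(ux,uy) \<noteq> (vx,vy)" and duw: "(ux,uy) \<noteq> (wx,wy)" and dvw: "(vx,vy) \<noteq> (wx,wy)"
  shows False
proof -
  define N where "N = gx^2 + gy^2"
  have N: "N > 0" using g unfolding N_def by (auto simp: sum_power2_gt_zero_iff)
  define d1 where "d1 = - gy"
  define d2 where "d2 = gx"
  define s where "s = ((vx-ux)*d1 + (vy-uy)*d2)/N"
  define t where "t = ((wx-ux)*d1 + (wy-uy)*d2)/N"
  have "(vx - ux) * N = ((vx-ux)*d1 + (vy-uy)*d2) * d1" using lv unfolding N_def d1_def d2_def by algebra
  hence vx: "vx = ux + s*d1" unfolding s_def using N by (simp add: field_simps)
  have "(vy - uy) * N = ((vx-ux)*d1 + (vy-uy)*d2) * d2" using lv unfolding N_def d1_def d2_def by algebra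
  hence vy: "vy = uy + s*d2" unfolding s_def using N by (simp add: field_simps)
  have "(wx - ux) * N = ((wx-ux)*d1 + (wy-uy)*d2) * d1" using lw unfolding N_def d1_def d2_def by algebra
  hence wx: "wx = ux + t*d1" unfolding t_def using N by (simp add: field_simps)
  have "(wy - uy) * N = ((wx-ux)*d1 + (wy-uy)*d2) * d2" using lw unfolding N_def d1_def d2_def by algebra
  hence wy: "wy = uy + t*d2" unfolding t_def using N by (simp add: field_simps)
  have s0: "s \<noteq> 0" using duv vx vy by auto
  have t0: "t \<noteq> 0" using duw wx wy by auto
  have st: "s \<noteq> t" using dvw vx vy wx wy by auto
  define Bud where "Bud = a*ux*d1 + b*(ux*d2+uy*d1) + c*uy*d2"
  define qd where "qd = a*d1^2 + 2*b*d1*d2 + c*d2^2"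
  have "a*(ux + s*d1)^2 + 2*b*(ux + s*d1)*(uy + s*d2) + c*(uy + s*d2)^2 - (a*ux^2 + 2*b*ux*uy + c*uy^2) = s * (2*Bud + s*qd)"
    unfolding Bud_def qd_def by (simp add: power2_eq_square algebra_simps)
  hence "s * (2*Bud + s*qd) = 0" using qu qv[unfolded vx vy] by simp
  hence es: "2*Bud + s*qd = 0" using s0 by simp
  have "a*(ux + t*d1)^2 + 2*b*(ux + t*d1)*(uy + t*d2) + c*(uy + t*d2)^2 - (a*ux^2 + 2*b*ux*uy + c*uy^2) = t * (2*Bud + t*qd)"
    unfolding Bud_def qd_def by (simp add: power2_eq_square algebra_simps)
  hence "t * (2*Bud + t*qd) = 0" using qu qw[unfolded wx wy] by simp
  hence et: "2*Bud + t*qd = 0" using t0 by simp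
  have "(s - t) * qd = 0" using es et by algebra
  hence qd0: "qd = 0" using st by simp
  hence Bud0: "Bud = 0" using es by simp
  have "k * qd - Bud^2 = (a*c-b^2) * (gx*ux+gy*uy)^2"
    unfolding qu[symmetric] Bud_def qd_def d1_def d2_def by (simp add: power2_eq_square algebra_simps)
  hence "(a*c-b^2) * (gx*ux+gy*uy)^2 = 0" using qd0 Bud0 by simp
  hence gu: "gx*ux+gy*uy = 0" using det by simp
  have "N^2 * k = (ux*d1+uy*d2)^2 * qd"
  proof -
    have "N * ux = (ux*d1+uy*d2) * d1 + gx * (gx*ux+gy*uy)" unfolding N_def d1_def d2_def by (simp add: power2_eq_square algebra_simps)
    hence e1: "N * ux = (ux*d1+uy*d2) * d1" using gu by simp
    have "N * uy = (ux*d1+uy*d2) * d2 + gy * (gx*ux+gy*uy)" unfolding N_def d1_def d2_def by (simp add: power2_eq_square algebra_simps)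
    hence e2: "N * uy = (ux*d1+uy*d2) * d2" using gu by simp
    have "N^2 * k = a*(N*ux)^2 + 2*b*(N*ux)*(N*uy) + c*(N*uy)^2" unfolding qu[symmetric] by (simp add: power2_eq_square algebra_simps)
    also have "... = (ux*d1+uy*d2)^2 * qd" unfolding e1 e2 qd_def by (simp add: power2_eq_square algebra_simps)
    finally show ?thesis .
  qed
  hence "N^2 * k = 0" using qd0 by simp
  thus False using N k by simp
qed


lemma line_diff:
  fixes g P Q :: "real\<times>real"
  assumes g: "g \<noteq> 0" and hP: "fst g * fst P + snd g * snd P = k" and hQ: "fst g * fst Q + snd g * snd Q = k"
  shows "\<exists>t. P - Q = t *\<^sub>R (- snd g, fst g)"
proof -
  define N where "N = (fst g)^2 + (snd g)^2"
  have N: "N > 0" using g unfolding N_def by (cases g) (auto simp: sum_power2_gt_zero_iff zero_prod_def)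
  define t where "t = ((fst P - fst Q) * (- snd g) + (snd P - snd Q) * fst g) / N"
  have l: "fst g * (fst P - fst Q) + snd g * (snd P - snd Q) = 0" using hP hQ by (simp add: algebra_simps)
  define T where "T = (fst P - fst Q) * (- snd g) + (snd P - snd Q) * fst g"
  have "(fst P - fst Q) * N = T * (- snd g) + fst g * (fst g * (fst P - fst Q) + snd g * (snd P - snd Q))"
    unfolding N_def T_def by (simp add: power2_eq_square algebra_simps)
  hence "(fst P - fst Q) * N = T * (- snd g)" using l by simp
  hence e1: "fst P - fst Q = t * (- snd g)" using N unfolding t_def T_def[symmetric] by (simp add: field_simps)
  have "(snd P - snd Q) * N = T * (fst g) + snd g * (fst g * (fst P - fst Q) + snd g * (snd P - snd Q))"
    unfolding N_def T_def by (simp add: power2_eq_square algebra_simps)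
  hence "(snd P - snd Q) * N = T * (fst g)" using l by simp
  hence e2: "snd P - snd Q = t * (fst g)" using N unfolding t_def T_def[symmetric] by (simp add: field_simps)
  show ?thesis using e1 e2 by (intro exI[of _ t]) (simp add: prod_eq_iff)
qed

lemma line_collinear:
  fixes g X Y W :: "real\<times>real"
  assumes g: "g \<noteq> 0" and "fst g * fst X + snd g * snd X = k" "fst g * fst Y + snd g * snd Y = k"
    "fst g * fst W + snd g * snd W = k"
  shows "collinear {X, Y, W}"
  unfolding collinear_def
  apply (rule exI[of _ "(- snd g, fst g)"])
  using line_diff[OF g] assms by blast

lemma circle_line3:
  fixes g X Y W Q0 :: "real\<times>real"
  assumes r: "r > 0" and g: "g \<noteq> 0"
    and s: "X \<in> sphere Q0 r" "Y \<in> sphere Q0 r" "W \<in> sphere Q0 r"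
    and l: "fst g * fst X + snd g * snd X = k" "fst g * fst Y + snd g * snd Y = k"
    "fst g * fst W + snd g * snd W = k"
    and d: "X \<noteq> Y" "X \<noteq> W" "Y \<noteq> W"
  shows False
proof -
  have g': "fst g \<noteq> 0 \<or> snd g \<noteq> 0" using g by (cases g) (auto simp: zero_prod_def)
  show False
    apply (rule conic_line_real[where a=1 and b=0 and c=1 and k="r^2" and gx="fst g" and gy="snd g"
        and ux="fst X - fst Q0" and uy="snd X - snd Q0" and vx="fst Y - fst Q0" and vy="snd Y - snd Q0"
        and wx="fst W - fst Q0" and wy="snd W - snd Q0"])
    using r g' sphere_rr[OF s(1)] sphere_rr[OF s(2)] sphere_rr[OF s(3)] l d
    by (auto simp: algebra_simps prod_eq_iff power2_eq_square)
qed

definition gv :: "real \<Rightarrow> real \<Rightarrow> real \<Rightarrow> real\<times>real \<Rightarrow> real\<times>real" where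
  "gv a b c u = (a * fst u + b * snd u, b * fst u + c * snd u)"

lemma cbil_gv: "cbil a b c u v = fst (gv a b c u) * fst v + snd (gv a b c u) * snd v"
  unfolding cbil_def gv_def by (simp add: algebra_simps)

lemma gv_nz: "cbil a b c u u = 1 \<Longrightarrow> gv a b c u \<noteq> 0"
  unfolding cbil_gv by auto

lemma tline: "cbil a b c u (X - z) = 1 \<Longrightarrow>
   fst (gv a b c u) * fst X + snd (gv a b c u) * snd X = 1 + fst (gv a b c u) * fst z + snd (gv a b c u) * snd z"
  unfolding cbil_gv by (simp add: algebra_simps)

lemma tangent3:
  assumes det: "a*c - b^2 \<noteq> 0"
    and x: "x \<in> conic_set a b c z" "y \<in> conic_set a b c z" "w \<in> conic_set a b c z"
    and l: "cbil a b c (x - z) (p - z) = 1" "cbil a b c (y - z) (p - z) = 1" "cbil a b c (w - z) (p - z) = 1"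
    and d: "x \<noteq> y" "x \<noteq> w" "y \<noteq> w"
  shows False
proof -
  let ?gx = "a * fst (p - z) + b * snd (p - z)"
  let ?gy = "b * fst (p - z) + c * snd (p - z)"
  have l': "?gx * fst (x - z) + ?gy * snd (x - z) = 1" "?gx * fst (y - z) + ?gy * snd (y - z) = 1"
    "?gx * fst (w - z) + ?gy * snd (w - z) = 1"
    using l unfolding cbil_def by (simp_all add: algebra_simps)
  have g: "?gx \<noteq> 0 \<or> ?gy \<noteq> 0" using l'(1) by auto
  have q: "cbil a b c (x - z) (x - z) = 1" "cbil a b c (y - z) (y - z) = 1" "cbil a b c (w - z) (w - z) = 1"
    using x unfolding conic_set_def by auto
  show False
    apply (rule conic_line_real[OF det _ g, where k=1 and ux="fst (x - z)" and uy="snd (x - z)" and vx="fst (y - z)"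
       and vy="snd (y - z)" and wx="fst (w - z)" and wy="snd (w - z)"])
    using q l' d unfolding cbil_def by (auto simp: algebra_simps prod_eq_iff power2_eq_square)
qed

lemma noncoll: "\<not> collinear {A, B, C} \<Longrightarrow> A \<noteq> B \<and> B \<noteq> C \<and> A \<noteq> C"
  by (auto simp: insert_commute)

lemma thales:
  fixes X Y V Q0 :: "real\<times>real"
  assumes s: "X \<in> sphere Q0 r" "Y \<in> sphere Q0 r" "V \<in> sphere Q0 r"
    and o: "(X - V) \<bullet> (Y - V) = 0" and nc: "\<not> collinear {X, Y, V}"
  shows "X + Y = Q0 + Q0"
proof (rule ccontr)
  assume ne: "X + Y \<noteq> Q0 + Q0"
  define m where "m = X + Y - Q0 - Q0"
  have m: "m \<noteq> 0" using ne unfolding m_def by (auto simp: algebra_simps)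
  define k where "k = fst m * fst Q0 + snd m * snd Q0 + ((fst X - fst Q0)*(fst Y - fst Q0) + (snd X - snd Q0)*(snd Y - snd Q0)) + r^2"
  note sx = sphere_rr[OF s(1)] and sy = sphere_rr[OF s(2)] and sv = sphere_rr[OF s(3)]
  have o': "(fst X - fst V) * (fst Y - fst V) + (snd X - snd V) * (snd Y - snd V) = 0"
    using o by (simp add: inner_rr)
  have "fst m * fst X + snd m * snd X = k"
    using sx unfolding k_def m_def by (simp add: algebra_simps power2_eq_square)
  moreover have "fst m * fst Y + snd m * snd Y = k"
    using sy unfolding k_def m_def by (simp add: algebra_simps power2_eq_square)
  moreover have "fst m * fst V + snd m * snd V = k"
    using sv o' unfolding k_def m_def by (simp add: algebra_simps power2_eq_square)
  ultimately have "collinear {X, Y, V}" using line_collinear[OF m] by blast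
  thus False using nc by simp
qed


lemma tangent_sym: "tangent_line a b c z P Q = tangent_line a b c z Q P"
  unfolding tangent_line_def by auto

lemma pon_rot: "poncelet_triangle Oc r a b c z A B C \<Longrightarrow> poncelet_triangle Oc r a b c z B C A"
  unfolding poncelet_triangle_def by (auto simp: insert_commute)

lemma pon_swap: "poncelet_triangle Oc r a b c z A B C \<Longrightarrow> poncelet_triangle Oc r a b c z B A C"
  unfolding poncelet_triangle_def using tangent_sym by (metis insert_commute)

lemma not_coll_line:
  assumes "\<not> collinear {X, Y, W}" "x0 \<in> conic_set a b c z"
    "cbil a b c (x0 - z) (X - z) = 1" "cbil a b c (x0 - z) (Y - z) = 1" "cbil a b c (x0 - z) (W - z) = 1"
  shows False
proof -
  have "cbil a b c (x0 - z) (x0 - z) = 1" using assms(2) unfolding conic_set_def by auto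
  hence g: "gv a b c (x0 - z) \<noteq> 0" by (rule gv_nz)
  have "collinear {X, Y, W}"
    by (rule line_collinear[OF g tline[OF assms(3)] tline[OF assms(4)] tline[OF assms(5)]])
  thus False using assms(1) by simp
qed

lemma third_unique:
  assumes det: "a*c - b^2 \<noteq> 0" and r: "r > 0"
    and p1: "poncelet_triangle Oc r a b c z P Q R" and p2: "poncelet_triangle Oc r a b c z P Q R'"
  shows "R = R'"
proof -
  from p1 obtain x1 where x1: "x1 \<in> conic_set a b c z" "cbil a b c (x1 - z) (P - z) = 1" "cbil a b c (x1 - z) (Q - z) = 1"
    unfolding poncelet_triangle_def tangent_line_def by blast
  from p1 obtain x where x: "x \<in> conic_set a b c z" "cbil a b c (x - z) (R - z) = 1" "cbil a b c (x - z) (P - z) = 1"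
    unfolding poncelet_triangle_def tangent_line_def by blast
  from p2 obtain x' where x': "x' \<in> conic_set a b c z" "cbil a b c (x' - z) (R' - z) = 1" "cbil a b c (x' - z) (P - z) = 1"
    unfolding poncelet_triangle_def tangent_line_def by blast
  have nc1: "\<not> collinear {P, Q, R}" and nc2: "\<not> collinear {P, Q, R'}"
    using p1 p2 unfolding poncelet_triangle_def by auto
  have "x \<noteq> x1"
  proof
    assume "x = x1"
    thus False using not_coll_line[OF nc1 x1(1,2,3)] x by simp
  qed
  moreover have "x' \<noteq> x1"
  proof
    assume "x' = x1"
    thus False using not_coll_line[OF nc2 x1(1,2,3)] x' by simp
  qed
  ultimately have xx: "x = x'"
    using tangent3[OF det x(1) x'(1) x1(1) x(3) x'(3) x1(2)] by blast
  show "R = R'"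
  proof (rule ccontr)
    assume ne: "R \<noteq> R'"
    have d: "P \<noteq> R" "P \<noteq> R'" using noncoll[OF nc1] noncoll[OF nc2] by auto
    have "cbil a b c (x0 - z) (x0 - z) = 1" if "x0 \<in> conic_set a b c z" for x0 using that unfolding conic_set_def by auto
    hence g: "gv a b c (x - z) \<noteq> 0" using gv_nz x(1) by blast
    have s: "P \<in> sphere Oc r" "R \<in> sphere Oc r" "R' \<in> sphere Oc r" using p1 p2 unfolding poncelet_triangle_def by auto
    show False
      by (rule circle_line3[OF r g s tline[OF x(3)] tline[OF x(2)] tline[of a b c "x - z" R' z]])
         (use x' xx d ne in auto)
  qed
qed

lemma cbil_mid:
  assumes "P + Q = Oc + Oc" "cbil a b c u (P - z) = 1" "cbil a b c u (Q - z) = 1"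
  shows "cbil a b c u (Oc - z) = 1"
proof -
  have f: "fst Oc = (fst P + fst Q)/2" "snd Oc = (snd P + snd Q)/2"
    using arg_cong[OF assms(1), of fst] arg_cong[OF assms(1), of snd] by auto
  have "2 * cbil a b c u (Oc - z) = cbil a b c u (P - z) + cbil a b c u (Q - z)"
    unfolding cbil_def by (simp add: f field_simps)
  thus ?thesis using assms(2,3) by simp
qed


definition diamgood where
  "diamgood Oc r a b c z T x0 \<longleftrightarrow> (\<exists>P Q R. T = {P, Q, R} \<and> poncelet_triangle Oc r a b c z P Q R \<and> P + Q = Oc + Oc
     \<and> x0 \<in> conic_set a b c z \<and> cbil a b c (x0 - z) (P - z) = 1 \<and> cbil a b c (x0 - z) (Q - z) = 1)"

lemma diam_unique:
  assumes det: "a*c - b^2 \<noteq> 0" and r: "r > 0"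
    and g1: "diamgood Oc r a b c z T1 x0" and g2: "diamgood Oc r a b c z T2 x0"
  shows "T1 = T2"
proof -
  from g1 obtain P Q R where h1: "T1 = {P, Q, R}" "poncelet_triangle Oc r a b c z P Q R" "P + Q = Oc + Oc"
    "x0 \<in> conic_set a b c z" "cbil a b c (x0 - z) (P - z) = 1" "cbil a b c (x0 - z) (Q - z) = 1"
    unfolding diamgood_def by blast
  from g2 obtain P' Q' R' where h2: "T2 = {P', Q', R'}" "poncelet_triangle Oc r a b c z P' Q' R'" "P' + Q' = Oc + Oc"
    "cbil a b c (x0 - z) (P' - z) = 1" "cbil a b c (x0 - z) (Q' - z) = 1"
    unfolding diamgood_def by blast
  have "cbil a b c (x0 - z) (x0 - z) = 1" using h1(4) unfolding conic_set_def by auto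
  hence g: "gv a b c (x0 - z) \<noteq> 0" by (rule gv_nz)
  have nc: "\<not> collinear {P, Q, R}" using h1(2) unfolding poncelet_triangle_def by auto
  have s: "P \<in> sphere Oc r" "Q \<in> sphere Oc r" "P' \<in> sphere Oc r"
    using h1(2) h2(2) unfolding poncelet_triangle_def by auto
  have "P' = P \<or> P' = Q"
  proof (rule ccontr)
    assume "\<not> (P' = P \<or> P' = Q)"
    thus False using circle_line3[OF r g s tline[OF h1(5)] tline[OF h1(6)] tline[OF h2(4)]] noncoll[OF nc] by auto
  qed
  thus ?thesis
  proof
    assume e: "P' = P"
    hence "Q' = Q" using h1(3) h2(3) by (metis add_left_cancel)
    hence "R = R'" using third_unique[OF det r h1(2)] h2(2) e by simp
    thus ?thesis using h1(1) h2(1) e \<open>Q' = Q\<close> by simp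
  next
    assume e: "P' = Q"
    hence "Q' = P" using h1(3) h2(3) by (metis add_left_cancel add.commute)
    hence "R = R'" using third_unique[OF det r h1(2)] pon_swap[OF h2(2)] e by simp
    thus ?thesis using h1(1) h2(1) e \<open>Q' = P\<close> by (auto simp: insert_commute)
  qed
qed

lemma right_diam:
  assumes "poncelet_triangle Oc r a b c z A B C" "right_triangle A B C"
  shows "\<exists>x0. diamgood Oc r a b c z {A, B, C} x0"
proof -
  have th: "\<exists>x0. diamgood Oc r a b c z {P, Q, R} x0"
    if p: "poncelet_triangle Oc r a b c z P Q R" and o: "(P - R) \<bullet> (Q - R) = 0" for P Q R
  proof -
    have "P + Q = Oc + Oc"
      by (rule thales[where r=r]) (use p o in \<open>auto simp: poncelet_triangle_def\<close>)
    moreover obtain x0 where "x0 \<in> conic_set a b c z" "cbil a b c (x0 - z) (P - z) = 1" "cbil a b c (x0 - z) (Q - z) = 1"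
      using p unfolding poncelet_triangle_def tangent_line_def by blast
    ultimately show ?thesis using p unfolding diamgood_def by blast
  qed
  from assms(2) consider "(B - A) \<bullet> (C - A) = 0" | "(A - B) \<bullet> (C - B) = 0" | "(A - C) \<bullet> (B - C) = 0"
    unfolding right_triangle_def by blast
  thus ?thesis
  proof cases
    case 1
    from th[OF pon_rot[OF assms(1)] 1] show ?thesis by (simp add: insert_commute)
  next
    case 2
    from th[OF pon_rot[OF pon_rot[OF assms(1)]] ] 2 show ?thesis by (simp add: insert_commute inner_commute)
  next
    case 3
    from th[OF assms(1) 3] show ?thesis .
  qed
qed

lemma card_le2:
  assumes "\<forall>x\<in>S. \<forall>y\<in>S. \<forall>w\<in>S. x = y \<or> x = w \<or> y = w"
  shows "finite S \<and> card S \<le> 2"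
proof (cases "\<exists>x y. x \<in> S \<and> y \<in> S \<and> x \<noteq> y")
  case True
  then obtain x y where xy: "x \<in> S" "y \<in> S" "x \<noteq> y" by blast
  hence "S \<subseteq> {x, y}" using assms by blast
  moreover have "card {x, y} \<le> 2" by (simp add: card_insert_le_m1)
  ultimately show ?thesis by (meson card_mono finite.emptyI finite.insertI finite_subset le_trans)
next
  case False
  hence "S = {} \<or> (\<exists>x. S = {x})" by blast
  thus ?thesis by auto
qed

theorem proposition2p1:
  fixes Oc :: "real \<times> real" and r a b c :: real and z :: "real \<times> real"
  assumes "r > 0"
    and "central_conic a b c z"
    and "\<exists>A B C. poncelet_triangle Oc r a b c z A B C"
  shows "finite {T. \<exists>A B C. T = {A, B, C} \<and> poncelet_triangle Oc r a b c z A B C \<and> right_triangle A B C}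
       \<and> card {T. \<exists>A B C. T = {A, B, C} \<and> poncelet_triangle Oc r a b c z A B C \<and> right_triangle A B C} \<le> 2"
proof (rule card_le2, intro ballI)
  have det: "a*c - b^2 \<noteq> 0" using assms(2) unfolding central_conic_def by simp
  let ?S = "{T. \<exists>A B C. T = {A, B, C} \<and> poncelet_triangle Oc r a b c z A B C \<and> right_triangle A B C}"
  have get: "\<exists>x0. diamgood Oc r a b c z T x0 \<and> x0 \<in> conic_set a b c z \<and> cbil a b c (x0 - z) (Oc - z) = 1"
    if "T \<in> ?S" for T
  proof -
    from that obtain A B C where "T = {A, B, C}" "poncelet_triangle Oc r a b c z A B C" "right_triangle A B C" by blast
    then obtain x0 where g: "diamgood Oc r a b c z T x0" using right_diam by blast
    then obtain P Q where "P + Q = Oc + Oc" "x0 \<in> conic_set a b c z" "cbil a b c (x0 - z) (P - z) = 1" "cbil a b c (x0 - z) (Q - z) = 1"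
      unfolding diamgood_def by blast
    thus ?thesis using g cbil_mid by blast
  qed
  fix T1 T2 T3 assume "T1 \<in> ?S" "T2 \<in> ?S" "T3 \<in> ?S"
  then obtain x1 x2 x3 where
    h1: "diamgood Oc r a b c z T1 x1" "x1 \<in> conic_set a b c z" "cbil a b c (x1 - z) (Oc - z) = 1" and
    h2: "diamgood Oc r a b c z T2 x2" "x2 \<in> conic_set a b c z" "cbil a b c (x2 - z) (Oc - z) = 1" and
    h3: "diamgood Oc r a b c z T3 x3" "x3 \<in> conic_set a b c z" "cbil a b c (x3 - z) (Oc - z) = 1"
    using get by meson
  have "x1 = x2 \<or> x1 = x3 \<or> x2 = x3" using tangent3[OF det h1(2) h2(2) h3(2) h1(3) h2(3) h3(3)] by blast
  thus "T1 = T2 \<or> T1 = T3 \<or> T2 = T3"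
    using diam_unique[OF det assms(1)] h1(1) h2(1) h3(1) by metis
qed

end
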